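(* There is a constant $C_n>0$ depending only on $n$ such that: if $Z:\mathbb{T}^d\to Gl(n,\mathbb{C})$ (continuous) satisfies $\left|\int_{\mathbb{T}^d}\det Z(\theta)\,d\theta\right|=1$, then there exists $\lambda\in[-1,1]$ such that $$\left|\int_{\mathbb{T}^d}\det\big(\Re Z(\theta)+\lambda\Im Z(\theta)\big)\,d\theta\right|\ge C_n.$$
   Context: $\mathbb{T}^d=\mathbb{R}^d/\mathbb{Z}^d$ with Haar (Lebesgue) measure; $\Re Z$ and $\Im Z$ are the entrywise real and imaginary parts of $Z$. *)

theory Defs
  imports "HOL-Analysis.Analysis"
begin

text \<open>Haar (Lebesgue) probability measure on the torus T^d = R^d / Z^d, realised on the
fundamental domain [0,1]^d, points being (extensional) functions {..<d} -> real.\<close>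
definition torus_measure :: "nat \<Rightarrow> (nat \<Rightarrow> real) measure" where
  "torus_measure d = PiM {..<d} (\<lambda>_. restrict_space lborel {0..1::real})"

text \<open>A continuous map T^d -> X, i.e. a continuous function on R^d (points as extensional
functions {..<d} -> real, product topology) that is 1-periodic in every coordinate.\<close>
definition torus_continuous :: "nat \<Rightarrow> ((nat \<Rightarrow> real) \<Rightarrow> 'a::topological_space) \<Rightarrow> bool" where
  "torus_continuous d Z \<longleftrightarrow>
     continuous_on (PiE {..<d} (\<lambda>_. UNIV)) Z \<and>
     (\<forall>\<theta>\<in>PiE {..<d} (\<lambda>_. UNIV). \<forall>i<d. Z (\<theta>(i := \<theta> i + 1)) = Z \<theta>)"

definition Re_mat :: "complex^'n^'m \<Rightarrow> real^'n^'m" where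
  "Re_mat A = (\<chi> i j. Re (A $ i $ j))"

definition Im_mat :: "complex^'n^'m \<Rightarrow> real^'n^'m" where
  "Im_mat A = (\<chi> i j. Im (A $ i $ j))"

end

theory Submission imports Defs "HOL-Probability.Probability" "HOL-Computational_Algebra.Polynomial" begin

lemma space_torus: "space (torus_measure d) = PiE {..<d} (\<lambda>_. {0..1::real})"
  by (simp add: torus_measure_def space_PiM space_restrict_space)

lemma prob_torus: "prob_space (torus_measure d)"
  unfolding torus_measure_def
  by (intro prob_space_PiM prob_space_restrict_space) auto

lemma compact_torus: "compact (PiE {..<d::nat} (\<lambda>_. {0..1::real}))"
proof -
  have eq: "PiE {..<d} (\<lambda>_. {0..1::real}) = PiE UNIV (\<lambda>i. if i < d then {0..1} else {undefined})"
  proof (rule set_eqI)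
    fix x :: "nat \<Rightarrow> real"
    have e: "x i \<in> (if i < d then {0..1} else {undefined}) \<longleftrightarrow>
        (i < d \<longrightarrow> x i \<in> {0..1}) \<and> (\<not> i < d \<longrightarrow> x i = undefined)" for i
      by simp
    have "x \<in> PiE UNIV (\<lambda>i. if i < d then {0..1} else {undefined}) \<longleftrightarrow>
       (\<forall>i. (i < d \<longrightarrow> x i \<in> {0..1}) \<and> (\<not> i < d \<longrightarrow> x i = undefined))"
      by (simp only: PiE_UNIV_domain Pi_iff e) simp
    moreover have "x \<in> PiE {..<d} (\<lambda>_. {0..1::real}) \<longleftrightarrow>
       (\<forall>i. (i < d \<longrightarrow> x i \<in> {0..1}) \<and> (\<not> i < d \<longrightarrow> x i = undefined))"
      unfolding PiE_iff extensional_def by auto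
    ultimately show "x \<in> PiE {..<d} (\<lambda>_. {0..1::real}) \<longleftrightarrow> x \<in> PiE UNIV (\<lambda>i. if i < d then {0..1} else {undefined})"
      by simp
  qed
  have "compactin (product_topology (\<lambda>_. euclidean) UNIV) (PiE UNIV (\<lambda>i. if i < d then {0..1::real} else {undefined}))"
    by (subst compactin_PiE) (auto simp: compactin_euclidean_iff)
  moreover have "product_topology (\<lambda>_. euclidean) UNIV = (euclidean :: (nat \<Rightarrow> real) topology)"
    by (rule euclidean_product_topology)
  ultimately have "compactin euclidean (PiE UNIV (\<lambda>i. if i < d then {0..1::real} else {undefined}))"
    by simp
  then show ?thesis unfolding eq compactin_euclidean_iff .
qed

lemma coord_meas: "(\<lambda>x. x i) \<in> borel_measurable (torus_measure d)"
proof (cases "i < d")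
  case True
  have "(\<lambda>x. x i) \<in> measurable (torus_measure d) (restrict_space lborel {0..1::real})"
    unfolding torus_measure_def using True by (intro measurable_component_singleton) auto
  moreover have "(\<lambda>x. x) \<in> measurable (restrict_space lborel {0..1::real}) borel"
    by (intro measurable_restrict_space1) (simp add: measurable_lborel1)
  ultimately have "(\<lambda>x. x) \<circ> (\<lambda>x. x i) \<in> borel_measurable (torus_measure d)"
    by (rule measurable_comp)
  then show ?thesis by (simp add: comp_def)
next
  case False
  have "(\<lambda>x. undefined) \<in> borel_measurable (torus_measure d)" by simp
  then show ?thesis
    by (rule measurable_cong[THEN iffD1, rotated]) (use False in \<open>auto simp: space_torus PiE_iff extensional_def\<close>)
qed

lemma id_meas: "(\<lambda>x. x) \<in> borel_measurable (torus_measure d)"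
  by (rule measurable_coordinatewise_then_product) (rule coord_meas)

lemma integrable_torus:
  fixes g :: "(nat \<Rightarrow> real) \<Rightarrow> real"
  assumes "continuous_on (PiE {..<d} (\<lambda>_. UNIV)) g"
  shows "integrable (torus_measure d) g"
proof -
  let ?r = "\<lambda>\<theta>::nat\<Rightarrow>real. restrict \<theta> {..<d}"
  have cr: "continuous_on UNIV ?r"
  proof (intro continuous_on_coordinatewise_then_product)
    fix i
    show "continuous_on UNIV (\<lambda>x::nat\<Rightarrow>real. restrict x {..<d} i)"
      by (cases "i < d") (simp_all add: restrict_def continuous_on_const)
  qed
  have "?r ` UNIV \<subseteq> PiE {..<d} (\<lambda>_. UNIV)" by (simp add: image_subset_iff)
  then have "continuous_on UNIV (\<lambda>x. g (?r x))"
    by (intro continuous_on_compose2[OF assms cr])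
  then have "continuous_on UNIV (g \<circ> ?r)" by (simp add: comp_def)
  then have "(g \<circ> ?r) \<in> borel_measurable borel" by (rule borel_measurable_continuous_onI)
  then have m1: "(\<lambda>x. (g \<circ> ?r) x) \<in> borel_measurable (torus_measure d)"
    using measurable_comp[OF id_meas] by (simp add: comp_def)
  have rw: "restrict w {..<d} = w" if "w \<in> PiE {..<d} (\<lambda>_. {0..1::real})" for w
    using that by (simp add: PiE_def extensional_restrict)
  have meas: "g \<in> borel_measurable (torus_measure d)"
    by (rule measurable_cong[THEN iffD1, OF _ m1]) (simp add: space_torus rw)
  have "continuous_on (PiE {..<d} (\<lambda>_. {0..1::real})) g"
    by (rule continuous_on_subset[OF assms]) (auto simp: PiE_iff)
  then have "compact (g ` PiE {..<d} (\<lambda>_. {0..1::real}))"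
    using compact_continuous_image compact_torus by blast
  then have "bounded (g ` PiE {..<d} (\<lambda>_. {0..1::real}))" by (rule compact_imp_bounded)
  then obtain B where B: "\<And>x. x \<in> g ` PiE {..<d} (\<lambda>_. {0..1::real}) \<Longrightarrow> norm x \<le> B"
    unfolding bounded_iff by blast
  interpret prob_space "torus_measure d" by (rule prob_torus)
  show ?thesis
    by (rule integrable_const_bound[where B=B]) (use B meas in \<open>auto simp: space_torus\<close>)
qed

definition nodes :: "nat \<Rightarrow> nat \<Rightarrow> complex" where
  "nodes N k = of_real (real k / real (Suc N))"

definition lag :: "nat \<Rightarrow> nat \<Rightarrow> complex poly" where
  "lag N k = (\<Prod>j\<in>{..N}-{k}. smult (1 / (nodes N k - nodes N j)) [:- nodes N j, 1:])"

lemma nodes_inj: "inj_on (nodes N) {..N}"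
proof (rule inj_onI)
  fix x y assume "nodes N x = nodes N y"
  then have "real x / real (Suc N) = real y / real (Suc N)"
    unfolding nodes_def by (simp only: of_real_eq_iff)
  then show "x = y" by simp
qed

lemma nodes_neq: "j \<noteq> k \<Longrightarrow> j \<le> N \<Longrightarrow> k \<le> N \<Longrightarrow> nodes N k - nodes N j \<noteq> 0"
  using nodes_inj[of N] by (auto simp: inj_on_def)

lemma degree_lag: "k \<le> N \<Longrightarrow> degree (lag N k) \<le> N"
proof -
  assume "k \<le> N"
  have "degree (lag N k) \<le> sum (degree \<circ> (\<lambda>j. smult (1 / (nodes N k - nodes N j)) [:- nodes N j, 1:])) ({..N}-{k})"
    unfolding lag_def by (rule degree_prod_sum_le) simp
  also have "\<dots> \<le> sum (\<lambda>_. 1) ({..N}-{k})"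
    by (intro sum_mono) (auto intro: order.trans[OF degree_smult_le])
  also have "\<dots> \<le> N" using \<open>k \<le> N\<close> by (simp add: card_Diff_singleton)
  finally show ?thesis .
qed

lemma poly_lag: "k \<le> N \<Longrightarrow> m \<le> N \<Longrightarrow> poly (lag N k) (nodes N m) = (if m = k then 1 else 0)"
proof -
  assume k: "k \<le> N" and m: "m \<le> N"
  have eq: "poly (lag N k) (nodes N m) = (\<Prod>j\<in>{..N}-{k}. (nodes N m - nodes N j) / (nodes N k - nodes N j))"
    unfolding lag_def poly_prod by (intro prod.cong refl) (simp add: divide_inverse algebra_simps)
  show ?thesis
  proof (cases "m = k")
    case True
    then show ?thesis unfolding eq using nodes_neq k by (auto intro!: prod.neutral)
  next
    case False
    then show ?thesis unfolding eq using m by (auto intro!: prod_zero bexI[of _ m])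
  qed
qed

lemma interp:
  assumes "degree q \<le> N"
  shows "poly q z = (\<Sum>k\<le>N. poly q (nodes N k) * poly (lag N k) z)"
proof -
  define Q where "Q = (\<Sum>k\<le>N. smult (poly q (nodes N k)) (lag N k))"
  have dQ: "degree Q \<le> N" unfolding Q_def
    by (intro degree_sum_le) (auto intro: order.trans[OF degree_smult_le] degree_lag)
  have pQ: "poly q x = poly Q x" if "x \<in> nodes N ` {..N}" for x
  proof -
    from that obtain m where m: "m \<le> N" "x = nodes N m" by auto
    have "poly Q x = (\<Sum>k\<le>N. poly q (nodes N k) * (if m = k then 1 else 0))"
      unfolding Q_def poly_sum poly_smult m(2) using m(1) by (intro sum.cong) (auto simp: poly_lag)
    also have "\<dots> = poly q x" using m by (simp add: if_distrib cong: if_cong)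
    finally show ?thesis by simp
  qed
  have card: "card (nodes N ` {..N}) = Suc N" using nodes_inj[of N] by (simp add: card_image)
  have "q = Q" by (rule poly_eqI_degree[OF pQ]) (use assms dQ card in auto)
  then have "poly q z = poly Q z" by simp
  then show ?thesis unfolding Q_def poly_sum poly_smult .
qed

lemma deg_lin: "degree [:a, b:] \<le> 1"
  by (cases "b = 0") auto

definition dpoly :: "complex^'n^'n \<Rightarrow> complex poly" where
  "dpoly Z = (\<Sum>p | p permutes (UNIV::'n set). smult (of_int (sign p))
      (\<Prod>i\<in>UNIV. [: complex_of_real (Re (Z$i$p i)), complex_of_real (Im (Z$i$p i)) :]))"

lemma dpoly_i: "poly (dpoly Z) \<i> = det Z"
  unfolding dpoly_def det_def poly_sum poly_smult poly_prod
  by (intro sum.cong refl arg_cong2[where f="(*)"] prod.cong) (simp_all add: complex_eq_iff)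

lemma dpoly_real: "poly (dpoly Z) (of_real t) = of_real (det (Re_mat Z + t *\<^sub>R Im_mat Z))"
  unfolding dpoly_def det_def poly_sum poly_smult poly_prod of_real_sum of_real_mult of_real_prod
  by (intro sum.cong refl arg_cong2[where f="(*)"] prod.cong) (simp_all add: Re_mat_def Im_mat_def)

lemma degree_dpoly: "degree (dpoly (Z::complex^'n^'n)) \<le> CARD('n)"
  unfolding dpoly_def
proof (intro degree_sum_le)
  fix p :: "'n \<Rightarrow> 'n"
  have "degree (\<Prod>i\<in>UNIV. [: complex_of_real (Re (Z$i$p i)), complex_of_real (Im (Z$i$p i)) :])
     \<le> sum (\<lambda>_. 1) (UNIV::'n set)"
  proof (rule order.trans[OF degree_prod_sum_le])
    show "sum (degree \<circ> (\<lambda>i. [: complex_of_real (Re (Z$i$p i)), complex_of_real (Im (Z$i$p i)) :])) UNIV \<le> sum (\<lambda>_. 1) (UNIV::'n set)"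
      by (rule sum_mono) (unfold o_def, rule deg_lin)
  qed simp
  then show "degree (smult (of_int (sign p)) (\<Prod>i\<in>UNIV. [: complex_of_real (Re (Z$i$p i)), complex_of_real (Im (Z$i$p i)) :])) \<le> CARD('n)"
    by (intro order.trans[OF degree_smult_le]) simp
qed simp

lemma cont_f:
  fixes Z :: "(nat \<Rightarrow> real) \<Rightarrow> complex^'n^'n"
  assumes "continuous_on S Z"
  shows "continuous_on S (\<lambda>\<theta>. det (Re_mat (Z \<theta>) + t *\<^sub>R Im_mat (Z \<theta>)))"
  unfolding det_def Re_mat_def Im_mat_def
  by (simp add: assms continuous_intros)

theorem lemma6:
  "\<exists>C>0. \<forall>(d::nat) (Z :: (nat \<Rightarrow> real) \<Rightarrow> complex^'n^'n).
     torus_continuous d Z \<longrightarrow>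
     (\<forall>\<theta>\<in>PiE {..<d} (\<lambda>_. UNIV). invertible (Z \<theta>)) \<longrightarrow>
     norm (LINT \<theta>|torus_measure d. det (Z \<theta>)) = 1 \<longrightarrow>
     (\<exists>lam::real\<in>{-1..1}.
        \<bar>LINT \<theta>|torus_measure d. det (Re_mat (Z \<theta>) + lam *\<^sub>R Im_mat (Z \<theta>))\<bar> \<ge> C)"
proof -
  define N where "N = CARD('n)"
  define w where "w k = poly (lag N k) \<i>" for k
  define S where "S = (\<Sum>k\<le>N. norm (w k))"
  define C where "C = 1 / (S + 1)"
  have S0: "S \<ge> 0" unfolding S_def by (simp add: sum_nonneg)
  have C0: "C > 0" unfolding C_def using S0 by simp
  have CS: "C * S < 1" unfolding C_def using S0 by (simp add: field_simps)
  define x where "x k = real k / real (Suc N)" for k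
  have nx: "nodes N k = of_real (x k)" for k unfolding nodes_def x_def ..
  have xin: "x k \<in> {-1..1}" if "k \<le> N" for k
    using that unfolding x_def by (auto simp: field_simps)
  show ?thesis
  proof (rule exI[of _ C], intro conjI C0 allI impI)
    fix d and Z :: "(nat \<Rightarrow> real) \<Rightarrow> complex^'n^'n"
    assume tc: "torus_continuous d Z"
      and "\<forall>\<theta>\<in>PiE {..<d} (\<lambda>_. UNIV). invertible (Z \<theta>)"
      and n1: "norm (LINT \<theta>|torus_measure d. det (Z \<theta>)) = 1"
    define f where "f k \<theta> = det (Re_mat (Z \<theta>) + x k *\<^sub>R Im_mat (Z \<theta>))" for k \<theta>
    define I where "I k = (LINT \<theta>|torus_measure d. f k \<theta>)" for k
    have cZ: "continuous_on (PiE {..<d} (\<lambda>_. UNIV)) Z" using tc unfolding torus_continuous_def by simp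
    have intf: "integrable (torus_measure d) (f k)" for k
      unfolding f_def by (rule integrable_torus, rule cont_f, rule cZ)
    have pw: "det (Z \<theta>) = (\<Sum>k\<le>N. of_real (f k \<theta>) * w k)" for \<theta>
    proof -
      have "det (Z \<theta>) = poly (dpoly (Z \<theta>)) \<i>" by (simp add: dpoly_i)
      also have "\<dots> = (\<Sum>k\<le>N. poly (dpoly (Z \<theta>)) (nodes N k) * poly (lag N k) \<i>)"
        by (rule interp) (simp add: N_def degree_dpoly)
      also have "\<dots> = (\<Sum>k\<le>N. of_real (f k \<theta>) * w k)"
        by (simp add: nx dpoly_real f_def w_def)
      finally show ?thesis .
    qed
    have "(LINT \<theta>|torus_measure d. det (Z \<theta>)) = (LINT \<theta>|torus_measure d. (\<Sum>k\<le>N. of_real (f k \<theta>) * w k))"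
      by (simp only: pw)
    also have "\<dots> = (\<Sum>k\<le>N. LINT \<theta>|torus_measure d. of_real (f k \<theta>) * w k)"
      by (rule Bochner_Integration.integral_sum) (intro integrable_mult_left integrable_of_real intf)
    also have "\<dots> = (\<Sum>k\<le>N. of_real (I k) * w k)"
      by (simp add: I_def)
    finally have eqI: "(LINT \<theta>|torus_measure d. det (Z \<theta>)) = (\<Sum>k\<le>N. of_real (I k) * w k)" .
    show "\<exists>lam::real\<in>{-1..1}.
        \<bar>LINT \<theta>|torus_measure d. det (Re_mat (Z \<theta>) + lam *\<^sub>R Im_mat (Z \<theta>))\<bar> \<ge> C"
    proof (rule ccontr)
      assume "\<not> ?thesis"
      then have lt: "\<bar>I k\<bar> < C" if "k \<le> N" for k
        using xin[OF that] unfolding I_def f_def by force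
      have "1 = norm (\<Sum>k\<le>N. of_real (I k) * w k)" using n1 eqI by simp
      also have "\<dots> \<le> (\<Sum>k\<le>N. norm (of_real (I k) * w k))" by (rule norm_sum)
      also have "\<dots> = (\<Sum>k\<le>N. \<bar>I k\<bar> * norm (w k))" by (simp add: norm_mult)
      also have "\<dots> \<le> (\<Sum>k\<le>N. C * norm (w k))"
        by (intro sum_mono mult_right_mono) (auto intro: less_imp_le lt)
      also have "\<dots> = C * S" by (simp add: S_def sum_distrib_left)
      finally show False using CS by simp
    qed
  qed
qed

end
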